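(* Let $k=\mathbb{F}_3$, equip $k^7$ with the bilinear form $\langle x,y\rangle=x_1y_7+x_2y_6+\dots+x_7y_1$, let $SO_7$ be the corresponding special orthogonal group and $B\subset SO_7$ the Borel subgroup of upper triangular matrices in $SO_7$. Let $A$ be a $7\times7$ matrix over $k$ self-adjoint for this form, and let \[ X_A(k)=\{gB(k)\in SO_7(k)/B(k):\ M=g^{-1}Ag \text{ satisfies } M_{ij}=0 \text{ for all } (i,j)\in P\}, \] where $P=\{(3,1),(4,1),(5,1),(5,2),(6,1),(6,2),(6,3),(7,1),(7,2),(7,3),(7,4),(7,5)\}$. If there is no nonzero $v\in k^7$ such that $\langle v,v\rangle=\langle v,Av\rangle=\langle Av,Av\rangle=\langle Av,A^2v\rangle=0$ and $\langle A^2v,A^2v\rangle$ is a square in $k$, then $X_A(k)=\emptyset$.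
   Context: $M_{ij}$ denotes the entry in row $i$ and column $j$. The defining condition of $X_A(k)$ is invariant under right multiplication of $g$ by $B(k)$, so $X_A(k)$ is well defined. *)

theory Defs
  imports "HOL-Analysis.Analysis" "HOL-Library.Numeral_Type"
begin

text \<open>The field k = F_3 is the type 3 (integers mod 3). Vectors in k^7 are
  indexed by the type 7; the paper's index i in {1..7} corresponds to idx i.\<close>

type_synonym F3 = 3
type_synonym vec7 = "F3 ^ 7"
type_synonym mat7 = "F3 ^ 7 ^ 7"

definition idx :: "nat \<Rightarrow> 7" where
  "idx i = of_nat (i - 1)"

text \<open>Bilinear form x_1 y_7 + x_2 y_6 + ... + x_7 y_1.\<close>
definition form :: "vec7 \<Rightarrow> vec7 \<Rightarrow> F3" where
  "form x y = (\<Sum>i\<in>{1..7}. x $ idx i * y $ idx (8 - i))"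

definition SO7 :: "mat7 set" where
  "SO7 = {g. det g = 1 \<and> (\<forall>x y. form (g *v x) (g *v y) = form x y)}"

definition Borel7 :: "mat7 set" where
  "Borel7 = {b \<in> SO7. \<forall>i\<in>{1..7}. \<forall>j\<in>{1..7}. j < i \<longrightarrow> b $ idx i $ idx j = 0}"

definition self_adjoint7 :: "mat7 \<Rightarrow> bool" where
  "self_adjoint7 A \<longleftrightarrow> (\<forall>x y. form (A *v x) y = form x (A *v y))"

definition Ppos :: "(nat \<times> nat) set" where
  "Ppos = {(3,1),(4,1),(5,1),(5,2),(6,1),(6,2),(6,3),(7,1),(7,2),(7,3),(7,4),(7,5)}"

text \<open>X_A(k), as a set of left cosets g B(k) in SO_7(k).\<close>
definition XA :: "mat7 \<Rightarrow> mat7 set set" where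
  "XA A = {(\<lambda>b. g ** b) ` Borel7 | g. g \<in> SO7 \<and>
      (let M = matrix_inv g ** A ** g in \<forall>(i,j)\<in>Ppos. M $ idx i $ idx j = 0)}"

definition is_square :: "F3 \<Rightarrow> bool" where
  "is_square a \<longleftrightarrow> (\<exists>c. a = c * c)"

end

theory Submission
  imports Defs
begin
lemma cases7: "(x::7) = 0 \<or> x = 1 \<or> x = 2 \<or> x = 3 \<or> x = 4 \<or> x = 5 \<or> x = 6"
proof (induct x)
  case (of_int z)
  then have "z = 0 \<or> z = 1 \<or> z = 2 \<or> z = 3 \<or> z = 4 \<or> z = 5 \<or> z = 6" by auto
  then show ?case by (elim disjE) simp_all
qed
lemma univ7: "(UNIV::7 set) = {0,1,2,3,4,5,6}" 
proof (rule set_eqI)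
  fix x :: 7 show "x \<in> UNIV \<longleftrightarrow> x \<in> {0,1,2,3,4,5,6}" using cases7[of x] by simp
qed
lemma dist7: "(0::7) \<noteq> 1" "(0::7) \<noteq> 2" "(0::7) \<noteq> 3" "(0::7) \<noteq> 4" "(0::7) \<noteq> 5" "(0::7) \<noteq> 6"
  "(1::7) \<noteq> 2" "(1::7) \<noteq> 3" "(1::7) \<noteq> 4" "(1::7) \<noteq> 5" "(1::7) \<noteq> 6"
  "(2::7) \<noteq> 3" "(2::7) \<noteq> 4" "(2::7) \<noteq> 5" "(2::7) \<noteq> 6"
  "(3::7) \<noteq> 4" "(3::7) \<noteq> 5" "(3::7) \<noteq> 6" "(4::7) \<noteq> 5" "(4::7) \<noteq> 6" "(5::7) \<noteq> 6"
  by simp_all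
lemma sum7: "sum f (UNIV::7 set) = f 0 + f 1 + f 2 + f 3 + f 4 + f 5 + f 6"
  unfolding univ7 by (simp only: sum.insert finite.intros finite_insert insert_iff empty_iff dist7 not_False_eq_True simp_thms sum.empty add_0_right add.assoc)
lemma s17: "sum f {1..7::nat} = f 1 + f 2 + f 3 + f 4 + f 5 + f 6 + f 7" by (simp add: eval_nat_numeral)
lemma idxs: "idx 1 = 0" "idx (Suc 0) = 0" "idx 2 = 1" "idx 3 = 2" "idx 4 = 3" "idx 5 = 4" "idx 6 = 5" "idx 7 = 6"
  by (simp_all add: idx_def)
lemma form7: "form x y = x$0*y$6 + x$1*y$5 + x$2*y$4 + x$3*y$3+x$4*y$2+x$5*y$1+x$6*y$0"
  unfolding form_def s17 by (simp add: idxs add.assoc)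
lemma form_sum: "form x y = (\<Sum>k\<in>UNIV. x$k * y$(6-k))"
  by (simp add: form7 sum7)
lemma rev_sum: "(\<Sum>k\<in>UNIV. f k) = (\<Sum>k\<in>(UNIV::7 set). f (6 - k))"
  by (rule sum.reindex_bij_witness[of UNIV "\<lambda>k. 6-k" "\<lambda>k. 6-k"]) auto
lemma col: "(g *v axis c 1) $ k = g $ k $ (c::7)"
  by (simp add: matrix_vector_mult_def axis_def if_distrib cong: if_cong)
lemma form_axis: "form (axis a 1) w = w $ (6 - a)"
proof -
  have "form (axis a 1) w = (\<Sum>k\<in>UNIV. (if k = a then w $ (6 - k) else 0))"
    unfolding form_sum axis_def by (rule sum.cong) auto
  then show ?thesis by simp
qed

lemma inv_ok:
  fixes g :: mat7
  assumes pres: "\<forall>x y. form (g *v x) (g *v y) = form x y"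
  shows "g ** matrix_inv g = mat 1" and "inj ((*v) g)"
proof -
  define B :: mat7 where "B = (\<chi> i j. g $ (6-j) $ (6-i))"
  have BG: "B ** g = mat 1"
  proof -
    have "(B ** g) $ i $ j = mat 1 $ i $ j" for i j
    proof -
      have "(B ** g) $ i $ j = (\<Sum>k\<in>UNIV. g $ (6-k) $ (6-i) * g $ k $ j)"
        by (simp add: B_def matrix_matrix_mult_def)
      also have "\<dots> = (\<Sum>k\<in>UNIV. g $ k $ (6-i) * g $ (6-k) $ j)"
        by (subst rev_sum) simp
      also have "\<dots> = form (g *v axis (6-i) 1) (g *v axis j 1)"
        by (simp add: form_sum col)
      also have "\<dots> = form (axis (6-i) 1) (axis j 1)" using pres by simp
      also have "\<dots> = mat 1 $ i $ j" unfolding form_axis by (simp add: axis_def mat_def)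
      finally show ?thesis .
    qed
    then show ?thesis by (simp add: vec_eq_iff)
  qed
  have inv1: "B *v (g *v x) = x" for x
    by (simp add: matrix_vector_mul_assoc BG)
  show inj: "inj ((*v) g)" by (metis inv1 injI)
  have su: "surj ((*v) g)" using finite_UNIV_inj_surj[OF _ inj] by simp
  have GB: "g ** B = mat 1"
  proof (subst matrix_eq, rule allI)
    fix y
    obtain x where "y = g *v x" using su by (metis surjD)
    then show "(g ** B) *v y = mat 1 *v y"
      by (simp add: matrix_vector_mul_assoc[symmetric] inv1)
  qed
  have "invertible g" using GB BG invertible_def by blast
  then have "\<exists>A'. g ** A' = mat 1 \<and> A' ** g = mat 1" by (simp add: invertible_def)
  then show "g ** matrix_inv g = mat 1" unfolding matrix_inv_def by (rule someI_ex[THEN conjunct1])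
qed
theorem mainTheorem10:
  fixes A :: mat7
  assumes "self_adjoint7 A"
    and "\<not> (\<exists>v :: vec7. v \<noteq> 0 \<and> form v v = 0 \<and> form v (A *v v) = 0
            \<and> form (A *v v) (A *v v) = 0 \<and> form (A *v v) (A *v (A *v v)) = 0
            \<and> is_square (form (A *v (A *v v)) (A *v (A *v v))))"
  shows "XA A = {}"
proof (rule ccontr)
  assume "XA A \<noteq> {}"
  then obtain g where gS: "g \<in> SO7" and z: "\<forall>(i,j)\<in>Ppos. (matrix_inv g ** A ** g) $ idx i $ idx j = 0"
    unfolding XA_def Let_def by blast
  define M where "M = matrix_inv g ** A ** g"
  have pres: "\<forall>x y. form (g *v x) (g *v y) = form x y" using gS by (simp add: SO7_def)
  note gi = inv_ok[OF pres]
  have gM: "g ** M = A ** g" unfolding M_def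
    by (metis gi(1) matrix_mul_assoc matrix_mul_lid)
  have zz: "M$2$0 = 0" "M$3$0 = 0" "M$4$0 = 0" "M$5$0 = 0" "M$6$0 = 0"
      "M$4$1 = 0" "M$5$1 = 0" "M$6$1 = 0"
    using z unfolding M_def[symmetric] by (auto simp: Ppos_def idx_def)
  define e :: vec7 where "e = axis 0 1"
  define w1 where "w1 = M *v e"
  define w2 where "w2 = M *v w1"
  define v where "v = g *v e"
  have Av: "A *v v = g *v w1" unfolding v_def w1_def
    by (metis gM matrix_vector_mul_assoc)
  have AAv: "A *v (A *v v) = g *v w2" unfolding Av w2_def
    by (metis gM matrix_vector_mul_assoc)
  have w1c: "w1 $ k = M $ k $ 0" for k unfolding w1_def e_def by (rule col)
  have w2c: "w2 $ k = M $ k $ 0 * M $ 0 $ 0 + M $ k $ 1 * M $ 1 $ 0" if "k = 4 \<or> k = 5 \<or> k = 6 \<or> k = 3" for k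
    unfolding w2_def matrix_vector_mult_def using zz by (simp add: sum7 w1c)
  have w2z: "w2$4 = 0" "w2$5 = 0" "w2$6 = 0" using w2c zz by auto
  have ve: "v \<noteq> 0"
  proof
    assume "v = 0"
    then have "g *v e = g *v 0" by (simp add: v_def)
    then have "e = 0" using gi(2) by (meson injD)
    then show False by (simp add: e_def axis_eq_0_iff)
  qed
  have p: "form (g *v x) (g *v y) = form x y" for x y using pres by blast
  have "form v v = 0" unfolding v_def p by (simp add: form7 e_def axis_def)
  moreover have "form v (A *v v) = 0" unfolding Av unfolding v_def p using zz by (simp add: form7 e_def axis_def w1c)
  moreover have "form (A *v v) (A *v v) = 0" unfolding Av p using zz by (simp add: form7 w1c)
  moreover have "form (A *v v) (A *v (A *v v)) = 0" unfolding AAv unfolding Av p using zz w2z by (simp add: form7 w1c)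
  moreover have "is_square (form (A *v (A *v v)) (A *v (A *v v)))" unfolding AAv is_square_def p using w2z by (auto simp add: form7)
  ultimately show False using assms(2) ve by blast
qed
end
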